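(* Let $P$ be a causal logic program (possibly with default negation) and let $P'$ be its unlabelled version. Then: (1) if $I$ is a causal stable model of $P$, then $I^{cl}$ is a stable model of $P'$; (2) if $I'$ is a stable model of $P'$, then there is a unique causal stable model $I$ of $P$ such that $I'=I^{cl}$.
   Context: Causal values are down-sets of causal graphs (reflexively–transitively closed directed graphs on labels, ordered by reverse inclusion), with $0=\emptyset$ and $1$ the set of all causal graphs; $*$ = intersection, $+$ = union, $U\cdot U'={\downarrow}\{G\cdot G'\}$ with $G\cdot G'$ the closure of the graph with vertices $V\cup V'$ and edges $E\cup E'\cup(V\times V')$; a label $l$ denotes ${\downarrow}$ of the graph with only edge $(l,l)$. A causal logic program is a set of rules $t:H\leftarrow B_1,\dots,B_n$ with $t$ a label or $1$, $H$ an atom and $B_i$ literals $p$ or $\mathit{not}\ p$. A causal interpretation maps atoms to causal values; $I(\mathit{not}\ p)=1$ if $I(p)=0$, else $0$. For positive programs, $I$ is a model iff $(I(B_1)*\dots*I(B_n))\cdot t\subseteq I(H)$ for each rule, and the least model exists. The reduct $P^I$ is obtained by removing every rule containing a negative literal $B$ with $I(B)\ne 0$, then deleting all negative literals from the remaining rules. $I$ is a causal stable model of $P$ iff $I$ is the least causal model of $P^I$. The unlabelled version $P'$ replaces every label by $1$ (a standard normal program), and stable models of $P'$ are Gelfond–Lifschitz stable models viewed as maps to $\{0,1\}$. $I^{cl}(p)=0$ if $I(p)=0$, else $1$. *)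

theory Defs
  imports Main
begin

text \<open>A causal graph is represented by its edge set E over labels 'l; its vertex set
is Field E (every vertex carries its reflexive loop).\<close>

definition cgraph :: "('l \<times> 'l) set \<Rightarrow> bool" where
  "cgraph E \<longleftrightarrow> refl_on (Field E) E \<and> trans E"

definition cgraphs :: "('l \<times> 'l) set set" where
  "cgraphs = {E. cgraph E}"

text \<open>G \<le> G' in the causal order iff G \<supseteq> G'. Down-sets are therefore closed
under taking supergraphs.\<close>
definition causal_value :: "('l \<times> 'l) set set \<Rightarrow> bool" where
  "causal_value U \<longleftrightarrow> U \<subseteq> cgraphs \<and> (\<forall>G\<in>U. \<forall>G'. cgraph G' \<and> G \<subseteq> G' \<longrightarrow> G' \<in> U)"

definition gprod :: "('l \<times> 'l) set \<Rightarrow> ('l \<times> 'l) set \<Rightarrow> ('l \<times> 'l) set" where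
  "gprod E E' = (E \<union> E' \<union> (Field E \<times> Field E'))\<^sup>+"

definition vprod :: "('l \<times> 'l) set set \<Rightarrow> ('l \<times> 'l) set set \<Rightarrow> ('l \<times> 'l) set set" where
  "vprod U U' = {G''. cgraph G'' \<and> (\<exists>G\<in>U. \<exists>G'\<in>U'. gprod G G' \<subseteq> G'')}"

definition label_val :: "'l \<Rightarrow> ('l \<times> 'l) set set" where
  "label_val l = {G. cgraph G \<and> {(l, l)} \<subseteq> G}"

datatype 'l tag = One | Lab 'l
datatype 'a lit = Pos 'a | Neg 'a

text \<open>A rule t : H \<leftarrow> B1,...,Bn is a triple (t, H, [B1,...,Bn]).\<close>
type_synonym ('l, 'a) rule = "'l tag \<times> 'a \<times> 'a lit list"
type_synonym ('l, 'a) program = "('l, 'a) rule set"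
type_synonym ('l, 'a) interp = "'a \<Rightarrow> ('l \<times> 'l) set set"

definition tag_val :: "'l tag \<Rightarrow> ('l \<times> 'l) set set" where
  "tag_val t = (case t of One \<Rightarrow> cgraphs | Lab l \<Rightarrow> label_val l)"

definition causal_interp :: "('l, 'a) interp \<Rightarrow> bool" where
  "causal_interp I \<longleftrightarrow> (\<forall>p. causal_value (I p))"

definition lit_val :: "('l, 'a) interp \<Rightarrow> 'a lit \<Rightarrow> ('l \<times> 'l) set set" where
  "lit_val I L = (case L of Pos p \<Rightarrow> I p | Neg p \<Rightarrow> (if I p = {} then cgraphs else {}))"

text \<open>Product (intersection) of the body values; the empty product is 1.\<close>
definition body_val :: "('l, 'a) interp \<Rightarrow> 'a lit list \<Rightarrow> ('l \<times> 'l) set set" where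
  "body_val I B = cgraphs \<inter> (\<Inter>L\<in>set B. lit_val I L)"

definition is_causal_model :: "('l, 'a) program \<Rightarrow> ('l, 'a) interp \<Rightarrow> bool" where
  "is_causal_model P I \<longleftrightarrow> (\<forall>(t, H, B)\<in>P. vprod (body_val I B) (tag_val t) \<subseteq> I H)"

definition is_pos :: "'a lit \<Rightarrow> bool" where
  "is_pos L = (case L of Pos _ \<Rightarrow> True | Neg _ \<Rightarrow> False)"

definition reduct :: "('l, 'a) program \<Rightarrow> ('l, 'a) interp \<Rightarrow> ('l, 'a) program" where
  "reduct P I = {(t, H, filter is_pos B) | t H B.
      (t, H, B) \<in> P \<and> (\<forall>q. Neg q \<in> set B \<longrightarrow> I q = {})}"

definition causal_stable :: "('l, 'a) program \<Rightarrow> ('l, 'a) interp \<Rightarrow> bool" where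
  "causal_stable P I \<longleftrightarrow> causal_interp I \<and> is_causal_model (reduct P I) I \<and>
     (\<forall>J. causal_interp J \<and> is_causal_model (reduct P I) J \<longrightarrow> (\<forall>p. I p \<subseteq> J p))"

definition unlabel :: "('l, 'a) program \<Rightarrow> ('l, 'a) program" where
  "unlabel P = (\<lambda>(t, H, B). (One, H, B)) ` P"

definition gl_reduct :: "('l, 'a) program \<Rightarrow> 'a set \<Rightarrow> ('a \<times> 'a set) set" where
  "gl_reduct P M = {(H, {p. Pos p \<in> set B}) | t H B.
      (t, H, B) \<in> P \<and> (\<forall>q. Neg q \<in> set B \<longrightarrow> q \<notin> M)}"

definition gl_model :: "('a \<times> 'a set) set \<Rightarrow> 'a set \<Rightarrow> bool" where
  "gl_model R M \<longleftrightarrow> (\<forall>(H, Bs)\<in>R. Bs \<subseteq> M \<longrightarrow> H \<in> M)"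

definition gl_stable :: "('l, 'a) program \<Rightarrow> 'a set \<Rightarrow> bool" where
  "gl_stable P M \<longleftrightarrow> gl_model (gl_reduct P M) M \<and>
     (\<forall>M'. gl_model (gl_reduct P M) M' \<longrightarrow> M \<subseteq> M')"

text \<open>Stable models of the (standard) program P', viewed as maps into {0,1}.\<close>
definition std_stable :: "('l, 'a) program \<Rightarrow> ('l, 'a) interp \<Rightarrow> bool" where
  "std_stable P J \<longleftrightarrow> (\<forall>p. J p = {} \<or> J p = cgraphs) \<and> gl_stable P {p. J p \<noteq> {}}"

definition cl :: "('l, 'a) interp \<Rightarrow> ('l, 'a) interp" where
  "cl I = (\<lambda>p. if I p = {} then {} else cgraphs)"

end

theory Submission
  imports Defs
begin

lemma cgraph_UNIV: "cgraph UNIV"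
  by (simp add: cgraph_def refl_on_def trans_def)

lemma cgraph_empty: "cgraph {}"
  by (simp add: cgraph_def refl_on_def trans_def)

lemma cgraphs_ne: "cgraphs \<noteq> {}"
  using cgraph_empty by (auto simp: cgraphs_def)

lemma UNIV_in_cgraphs: "UNIV \<in> cgraphs"
  using cgraph_UNIV by (simp add: cgraphs_def)

lemma cv_UNIV: "causal_value U \<Longrightarrow> U \<noteq> {} \<Longrightarrow> UNIV \<in> U"
  unfolding causal_value_def using cgraph_UNIV by blast

lemma tag_UNIV: "UNIV \<in> tag_val t"
  by (cases t) (auto simp: tag_val_def label_val_def cgraph_UNIV UNIV_in_cgraphs)

lemma vprod_sub: "vprod U T \<subseteq> cgraphs"
  by (auto simp: vprod_def cgraphs_def)

lemma vprod_empty: "vprod {} T = {}"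
  by (simp add: vprod_def)

lemma vprod_ne: "UNIV \<in> U \<Longrightarrow> UNIV \<in> vprod U (tag_val t)"
  unfolding vprod_def using tag_UNIV cgraph_UNIV by blast

lemma vprod_mono: "U \<subseteq> U' \<Longrightarrow> vprod U T \<subseteq> vprod U' T"
  unfolding vprod_def by blast

lemma reduct_mem:
  "(t, H, B') \<in> reduct P I \<longleftrightarrow> (\<exists>B. B' = filter is_pos B \<and> (t, H, B) \<in> P \<and> (\<forall>q. Neg q \<in> set B \<longrightarrow> I q = {}))"
  by (auto simp: reduct_def)

lemma reduct_zero:
  assumes "\<And>p. I p = {} \<longleftrightarrow> J p = {}"
  shows "reduct P I = reduct P J"
  using assms unfolding reduct_def by auto

lemma body_pos_empty:
  assumes "Pos p \<in> set B" "K p = {}"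
  shows "body_val K (filter is_pos B) = {}"
proof -
  have "Pos p \<in> set (filter is_pos B)" using assms(1) by (simp add: is_pos_def)
  then show ?thesis using assms(2) unfolding body_val_def lit_val_def by force
qed

lemma body_pos_ne:
  assumes "causal_interp K" "\<And>p. Pos p \<in> set B \<Longrightarrow> K p \<noteq> {}"
  shows "UNIV \<in> body_val K (filter is_pos B)"
proof -
  have "\<And>L. L \<in> set (filter is_pos B) \<Longrightarrow> UNIV \<in> lit_val K L"
  proof -
    fix L assume "L \<in> set (filter is_pos B)"
    then have h: "L \<in> set B \<and> is_pos L" by (simp only: set_filter mem_Collect_eq)
    then obtain p where "L = Pos p" "Pos p \<in> set B"
      by (cases L) (auto simp: is_pos_def)
    then show "UNIV \<in> lit_val K L"
      using assms cv_UNIV unfolding causal_interp_def lit_val_def by auto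
  qed
  then show ?thesis unfolding body_val_def using UNIV_in_cgraphs by auto
qed

lemma body_mono:
  assumes "\<And>p. J p \<subseteq> K p"
  shows "body_val J (filter is_pos B) \<subseteq> body_val K (filter is_pos B)"
proof -
  have "\<And>L. L \<in> set (filter is_pos B) \<Longrightarrow> lit_val J L \<subseteq> lit_val K L"
  proof -
    fix L assume "L \<in> set (filter is_pos B)"
    then have h: "is_pos L" by (simp only: set_filter mem_Collect_eq)
    then obtain p where "L = Pos p"
      by (cases L) (auto simp: is_pos_def)
    then show "lit_val J L \<subseteq> lit_val K L" using assms by (simp add: lit_val_def)
  qed
  then show ?thesis unfolding body_val_def by blast
qed

lemma A1:
  assumes "causal_interp K" "is_causal_model (reduct P I) K"
  shows "gl_model (gl_reduct (unlabel P) {p. I p \<noteq> {}}) {p. K p \<noteq> {}}"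
proof -
  have "H \<in> {p. K p \<noteq> {}}" if r: "(H, Bs) \<in> gl_reduct (unlabel P) {p. I p \<noteq> {}}" and sub: "Bs \<subseteq> {p. K p \<noteq> {}}" for H Bs
  proof -
  from r obtain t0 B where tB: "(t0, H, B) \<in> P" and neg: "\<forall>q. Neg q \<in> set B \<longrightarrow> I q = {}"
    and Bs: "Bs = {p. Pos p \<in> set B}"
    by (auto simp: gl_reduct_def unlabel_def)
  have "(t0, H, filter is_pos B) \<in> reduct P I" using tB neg by (auto simp: reduct_mem)
  then have "vprod (body_val K (filter is_pos B)) (tag_val t0) \<subseteq> K H"
    using assms(2) unfolding is_causal_model_def by blast
  moreover have "UNIV \<in> body_val K (filter is_pos B)"
    using body_pos_ne[OF assms(1)] sub Bs by blast
  ultimately show ?thesis using vprod_ne by blast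
  qed
  then show ?thesis unfolding gl_model_def by blast
qed

definition ind :: "'a set \<Rightarrow> ('l, 'a) interp" where
  "ind S = (\<lambda>p. if p \<in> S then cgraphs else {})"

lemma ind_interp: "causal_interp (ind S)"
  unfolding causal_interp_def causal_value_def ind_def by (auto simp: cgraphs_def)

lemma A2:
  assumes "gl_model (gl_reduct (unlabel P) {p. I p \<noteq> {}}) S"
  shows "is_causal_model (reduct P I) (ind S)"
proof -
  have "vprod (body_val (ind S) B') (tag_val t) \<subseteq> ind S H" if "(t, H, B') \<in> reduct P I" for t H B'
  proof -
  from that obtain B where B': "B' = filter is_pos B" and tB: "(t, H, B) \<in> P"
    and neg: "\<forall>q. Neg q \<in> set B \<longrightarrow> I q = {}" by (auto simp: reduct_mem)
  have "(One, H, B) \<in> unlabel P" using tB unfolding unlabel_def by force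
  then have "(H, {p. Pos p \<in> set B}) \<in> gl_reduct (unlabel P) {p. I p \<noteq> {}}"
    using neg unfolding gl_reduct_def by blast
  then have imp: "{p. Pos p \<in> set B} \<subseteq> S \<Longrightarrow> H \<in> S" using assms unfolding gl_model_def by blast
  show "vprod (body_val (ind S) B') (tag_val t) \<subseteq> ind S H"
  proof (cases "H \<in> S")
    case True then show ?thesis using vprod_sub by (simp add: ind_def)
  next
    case False
    then obtain p where "Pos p \<in> set B" "p \<notin> S" using imp by blast
    then have "body_val (ind S) B' = {}" using body_pos_empty[of p B "ind S"] B'
      by (simp add: ind_def)
    then show ?thesis using vprod_empty[of "tag_val t"] by (metis empty_subsetI)
  qed
  qed
  then show ?thesis unfolding is_causal_model_def by blast
qed

lemma ind_ne: "(ind S p \<noteq> {}) = (p \<in> S)"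
  by (simp add: ind_def cgraphs_ne)

lemma cl_zero: "(cl I p = {}) = (I p = {})"
  by (simp add: cl_def cgraphs_ne)

lemma least_model:
  fixes Q :: "('l, 'a) program"
  assumes pos: "\<And>t H B'. (t, H, B') \<in> Q \<Longrightarrow> \<exists>B. B' = filter is_pos B"
  defines "J \<equiv> (\<lambda>p. cgraphs \<inter> (\<Inter>K\<in>{K. causal_interp K \<and> is_causal_model Q K}. K p))"
  shows "causal_interp J \<and> is_causal_model Q J \<and>
     (\<forall>K. causal_interp K \<and> is_causal_model Q K \<longrightarrow> (\<forall>p. J p \<subseteq> K p))"
proof (intro conjI allI impI)
  show le: "\<And>K p. causal_interp K \<and> is_causal_model Q K \<Longrightarrow> J p \<subseteq> K p"
    unfolding J_def by blast
  show "causal_interp J"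
    unfolding causal_interp_def causal_value_def
  proof (intro allI conjI ballI impI)
    fix p show "J p \<subseteq> cgraphs" unfolding J_def by blast
  next
    fix p G G' assume G: "G \<in> J p" and G': "cgraph G' \<and> G \<subseteq> G'"
    have "G' \<in> K p" if K: "causal_interp K \<and> is_causal_model Q K" for K
    proof -
      have "G \<in> K p" using G K unfolding J_def by blast
      moreover have "causal_value (K p)" using K unfolding causal_interp_def by blast
      ultimately show ?thesis using G' unfolding causal_value_def by blast
    qed
    moreover have "G' \<in> cgraphs" using G' by (simp add: cgraphs_def)
    ultimately show "G' \<in> J p" unfolding J_def by blast
  qed
  show "is_causal_model Q J"
    unfolding is_causal_model_def
  proof (clarify)
    fix t H B' G assume r: "(t, H, B') \<in> Q" and G: "G \<in> vprod (body_val J B') (tag_val t)"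
    obtain B where B: "B' = filter is_pos B" using pos r by blast
    have "G \<in> K H" if K: "causal_interp K \<and> is_causal_model Q K" for K
    proof -
      have "body_val J B' \<subseteq> body_val K B'" using B body_mono[of J K B] le[OF K] by simp
      then have "G \<in> vprod (body_val K B') (tag_val t)" using G vprod_mono[of "body_val J B'" "body_val K B'" "tag_val t"] by blast
      moreover have "vprod (body_val K B') (tag_val t) \<subseteq> K H" using K r unfolding is_causal_model_def by fast
      ultimately show ?thesis by blast
    qed
    moreover have "G \<in> cgraphs" using G vprod_sub by blast
    ultimately show "G \<in> J H" unfolding J_def by blast
  qed
qed

lemma least_model_ex:
  fixes Q :: "('l, 'a) program"
  assumes pos: "\<And>t H B'. (t, H, B') \<in> Q \<Longrightarrow> \<exists>B. B' = filter is_pos B"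
  shows "\<exists>J. causal_interp J \<and> is_causal_model Q J \<and>
     (\<forall>K. causal_interp K \<and> is_causal_model Q K \<longrightarrow> (\<forall>p. J p \<subseteq> K p))"
  apply (rule exI)
  apply (rule least_model)
  apply (erule pos)
  done

theorem theorem6:
  fixes P :: "('l, 'a) program"
  shows "(\<forall>I. causal_stable P I \<longrightarrow> std_stable (unlabel P) (cl I)) \<and>
         (\<forall>I'. std_stable (unlabel P) I' \<longrightarrow> (\<exists>!I. causal_stable P I \<and> I' = cl I))"
proof (intro conjI allI impI)
  fix I :: "('l, 'a) interp"
  assume st: "causal_stable P I"
  have zs: "{p. cl I p \<noteq> {}} = {p. I p \<noteq> {}}" using cl_zero[of I] by blast
  have m: "gl_model (gl_reduct (unlabel P) {p. I p \<noteq> {}}) {p. I p \<noteq> {}}"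
    using st A1[of I P I] unfolding causal_stable_def by blast
  have mi: "{p. I p \<noteq> {}} \<subseteq> M'" if "gl_model (gl_reduct (unlabel P) {p. I p \<noteq> {}}) M'" for M'
  proof -
    have "is_causal_model (reduct P I) (ind M')" by (rule A2[OF that])
    then have "\<forall>p. I p \<subseteq> ind M' p" using st ind_interp[of M'] unfolding causal_stable_def by blast
    then show ?thesis using ind_ne[of M'] by blast
  qed
  have v: "\<forall>p. cl I p = {} \<or> cl I p = cgraphs" by (simp add: cl_def)
  have "gl_stable (unlabel P) {p. I p \<noteq> {}}" unfolding gl_stable_def using m mi by blast
  then show "std_stable (unlabel P) (cl I)"
    unfolding std_stable_def zs using v by blast
next
  fix I' :: "('l, 'a) interp"
  assume sst: "std_stable (unlabel P) I'"
  let ?M = "{p. I' p \<noteq> {}}"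
  let ?Q = "reduct P I'"
  have vals: "\<And>p. I' p = {} \<or> I' p = cgraphs"
    using sst unfolding std_stable_def by blast
  have gs: "gl_stable (unlabel P) ?M" using sst unfolding std_stable_def by blast
  have gm: "gl_model (gl_reduct (unlabel P) ?M) ?M" using gs unfolding gl_stable_def by blast
  have gmin: "\<And>M'. gl_model (gl_reduct (unlabel P) ?M) M' \<Longrightarrow> ?M \<subseteq> M'"
    using gs unfolding gl_stable_def by blast
  have pos: "\<And>t H B'. (t, H, B') \<in> ?Q \<Longrightarrow> \<exists>B. B' = filter is_pos B"
    by (auto simp: reduct_mem)
  from least_model_ex[of ?Q, OF pos] obtain J where Jall: "causal_interp J \<and> is_causal_model ?Q J \<and>
     (\<forall>K. causal_interp K \<and> is_causal_model ?Q K \<longrightarrow> (\<forall>p. J p \<subseteq> K p))" ..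
  have Ji: "causal_interp J" using Jall by (rule conjunct1)
  have Jm: "is_causal_model ?Q J" using Jall by (rule conjunct1[OF conjunct2])
  have Jl: "\<And>K. causal_interp K \<and> is_causal_model ?Q K \<Longrightarrow> (\<forall>p. J p \<subseteq> K p)"
    using Jall by blast
  have s1: "{p. J p \<noteq> {}} \<subseteq> ?M"
  proof -
    have "is_causal_model ?Q (ind ?M)" by (rule A2[OF gm])
    then have "\<forall>p. J p \<subseteq> ind ?M p" using Jl ind_interp[of ?M] by blast
    then show ?thesis using ind_ne[of ?M] by blast
  qed
  have s2: "?M \<subseteq> {p. J p \<noteq> {}}" using gmin[OF A1[OF Ji Jm]] by blast
  have zero: "\<And>p. J p = {} \<longleftrightarrow> I' p = {}" using s1 s2 by blast
  have red: "reduct P J = ?Q" by (rule reduct_zero[of J I' P]) (rule zero)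
  have Jst: "causal_stable P J" unfolding causal_stable_def red using Ji Jm Jl by blast
  have Jcl: "I' = cl J"
  proof
    fix p show "I' p = cl J p"
    proof (cases "J p = {}")
      case True then show ?thesis using zero[of p] by (simp add: cl_def)
    next
      case False then show ?thesis using zero[of p] vals[of p] by (simp add: cl_def)
    qed
  qed
  show "\<exists>!I. causal_stable P I \<and> I' = cl I"
  proof (rule ex1I[of _ J])
    show "causal_stable P J \<and> I' = cl J" using Jst Jcl by blast
  next
    fix I assume a: "causal_stable P I \<and> I' = cl I"
    have z: "I p = {} \<longleftrightarrow> J p = {}" for p
    proof -
      have "cl I p = {} \<longleftrightarrow> I p = {}" by (rule cl_zero)
      then show ?thesis using a zero[of p] by simp
    qed
    have rr: "reduct P I = reduct P J" by (rule reduct_zero[of I J P]) (rule z)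
    have "\<forall>p. I p \<subseteq> J p" using a Jst rr unfolding causal_stable_def by simp
    moreover have "\<forall>p. J p \<subseteq> I p" using a Jst rr unfolding causal_stable_def by simp
    ultimately have "\<forall>p. I p \<subseteq> J p" "\<forall>p. J p \<subseteq> I p" by blast+
    then show "I = J" by (auto intro!: ext)
  qed
qed

end
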